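(* Let $G$ be a plane embedded graph whose external boundary is a simple cycle, and let $f$ be a convex combination map of $G$ which is an embedding. Then every bounded face of the straight-edge embedding determined by $f$ is convex.
   Context: Vertices on the external boundary cycle $C$ are external, others internal. A convex combination map of $G$ is a map $f$ from vertices to $\mathbb{R}^2$ such that the external vertices are mapped bijectively, in cyclic order along $C$, to the corners of a convex polygon $P$, and there are coefficients $\lambda_{uv}\ge0$, $\sum_v\lambda_{uv}=1$, $\lambda_{uv}>0$ iff ($u$ internal and $v$ a neighbour of $u$), with $f(u)=\sum_v\lambda_{uv}f(v)$ for every internal $u$. $f$ is an embedding if vertex images are distinct and the segments $[f(u),f(v)]$ for edges $\{u,v\}$ have pairwise disjoint relative interiors containing no vertex images. *)

theory Defs
  imports "HOL-Analysis.Analysis"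
begin

definition simple_graph :: "'a set \<Rightarrow> ('a \<times> 'a) set \<Rightarrow> bool" where
  "simple_graph V E \<longleftrightarrow> finite V \<and> E \<subseteq> V \<times> V \<and>
     (\<forall>u v. (u, v) \<in> E \<longrightarrow> (v, u) \<in> E) \<and> (\<forall>u. (u, u) \<notin> E)"

definition graph_cycle :: "'a set \<Rightarrow> ('a \<times> 'a) set \<Rightarrow> 'a list \<Rightarrow> bool" where
  "graph_cycle V E cs \<longleftrightarrow> distinct cs \<and> length cs \<ge> 3 \<and> set cs \<subseteq> V \<and>
     (\<forall>i < length cs. (cs ! i, cs ! ((i + 1) mod length cs)) \<in> E)"

definition arc_drawing :: "'a set \<Rightarrow> ('a \<times> 'a) set \<Rightarrow> ('a \<Rightarrow> complex)
    \<Rightarrow> ('a \<Rightarrow> 'a \<Rightarrow> real \<Rightarrow> complex) \<Rightarrow> complex set" where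
  "arc_drawing V E p \<gamma> = p ` V \<union> (\<Union>(u, v)\<in>E. path_image (\<gamma> u v))"

definition plane_embedding :: "'a set \<Rightarrow> ('a \<times> 'a) set \<Rightarrow> ('a \<Rightarrow> complex)
    \<Rightarrow> ('a \<Rightarrow> 'a \<Rightarrow> real \<Rightarrow> complex) \<Rightarrow> bool" where
  "plane_embedding V E p \<gamma> \<longleftrightarrow> inj_on p V \<and>
     (\<forall>(u, v)\<in>E. arc (\<gamma> u v) \<and> pathstart (\<gamma> u v) = p u \<and> pathfinish (\<gamma> u v) = p v \<and>
        path_image (\<gamma> v u) = path_image (\<gamma> u v) \<and>
        path_image (\<gamma> u v) \<inter> p ` V = {p u, p v}) \<and>
     (\<forall>(u, v)\<in>E. \<forall>(x, y)\<in>E. {u, v} \<noteq> {x, y} \<longrightarrow>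
        path_image (\<gamma> u v) \<inter> path_image (\<gamma> x y) \<subseteq> p ` ({u, v} \<inter> {x, y}))"

definition external_boundary_cycle :: "'a set \<Rightarrow> ('a \<times> 'a) set \<Rightarrow> ('a \<Rightarrow> complex)
    \<Rightarrow> ('a \<Rightarrow> 'a \<Rightarrow> real \<Rightarrow> complex) \<Rightarrow> 'a list \<Rightarrow> bool" where
  "external_boundary_cycle V E p \<gamma> cs \<longleftrightarrow> graph_cycle V E cs \<and>
     (\<forall>U\<in>components (- arc_drawing V E p \<gamma>). \<not> bounded U \<longrightarrow>
        frontier U = (\<Union>i<length cs. path_image (\<gamma> (cs ! i) (cs ! ((i + 1) mod length cs)))))"

definition cross3 :: "complex \<Rightarrow> complex \<Rightarrow> complex \<Rightarrow> real" where
  "cross3 a b c = Im (cnj (b - a) * (c - a))"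

definition convex_polygon_corners :: "(nat \<Rightarrow> complex) \<Rightarrow> nat \<Rightarrow> bool" where
  "convex_polygon_corners q n \<longleftrightarrow> n \<ge> 3 \<and>
     ((\<forall>i<n. \<forall>j<n. j \<noteq> i \<and> j \<noteq> (i + 1) mod n \<longrightarrow> cross3 (q i) (q ((i + 1) mod n)) (q j) > 0) \<or>
      (\<forall>i<n. \<forall>j<n. j \<noteq> i \<and> j \<noteq> (i + 1) mod n \<longrightarrow> cross3 (q i) (q ((i + 1) mod n)) (q j) < 0))"

definition convex_combination_map :: "'a set \<Rightarrow> ('a \<times> 'a) set \<Rightarrow> 'a list
    \<Rightarrow> ('a \<Rightarrow> complex) \<Rightarrow> bool" where
  "convex_combination_map V E cs f \<longleftrightarrow>
     convex_polygon_corners (\<lambda>i. f (cs ! i)) (length cs) \<and>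
     (\<exists>lam :: 'a \<Rightarrow> 'a \<Rightarrow> real.
        \<forall>u \<in> V - set cs.
          (\<forall>v\<in>V. lam u v \<ge> 0 \<and> (lam u v > 0 \<longleftrightarrow> (u, v) \<in> E)) \<and>
          (\<Sum>v\<in>V. lam u v) = 1 \<and>
          f u = (\<Sum>v\<in>V. lam u v *\<^sub>R f v))"

definition straight_line_embedding :: "'a set \<Rightarrow> ('a \<times> 'a) set \<Rightarrow> ('a \<Rightarrow> complex) \<Rightarrow> bool" where
  "straight_line_embedding V E f \<longleftrightarrow> inj_on f V \<and>
     (\<forall>(u, v)\<in>E. open_segment (f u) (f v) \<inter> f ` V = {}) \<and>
     (\<forall>(u, v)\<in>E. \<forall>(x, y)\<in>E. {u, v} \<noteq> {x, y} \<longrightarrow>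
        open_segment (f u) (f v) \<inter> open_segment (f x) (f y) = {})"

definition straight_drawing :: "'a set \<Rightarrow> ('a \<times> 'a) set \<Rightarrow> ('a \<Rightarrow> complex) \<Rightarrow> complex set" where
  "straight_drawing V E f = f ` V \<union> (\<Union>(u, v)\<in>E. closed_segment (f u) (f v))"

definition straight_faces :: "'a set \<Rightarrow> ('a \<times> 'a) set \<Rightarrow> ('a \<Rightarrow> complex) \<Rightarrow> complex set set" where
  "straight_faces V E f = components (- straight_drawing V E f)"

end

theory Submission
  imports Defs
begin

lemma cross3_coord: "cross3 a b c = (Re b - Re a)*(Im c - Im a) - (Im b - Im a)*(Re c - Re a)"
  by (simp add: cross3_def algebra_simps)

lemma cross3_comb: "cross3 a b ((1-u) *\<^sub>R p + u *\<^sub>R q) = (1-u)*cross3 a b p + u*cross3 a b q"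
  by (simp add: cross3_coord scaleR_conv_of_real algebra_simps)

lemma cross3_self1[simp]: "cross3 a b a = 0" and cross3_self2[simp]: "cross3 a b b = 0"
  by (simp_all add: cross3_coord)

lemma real_line_aux:
  fixes dx dy zx zy :: real
  assumes "dx^2 + dy^2 \<noteq> 0" "dx*zy = dy*zx"
  shows "zx = ((dx*zx + dy*zy)/(dx^2+dy^2)) * dx" "zy = ((dx*zx + dy*zy)/(dx^2+dy^2)) * dy"
proof -
  have "zx * (dx^2+dy^2) = (dx*zx + dy*zy) * dx" using assms(2)
    by (simp add: power2_eq_square algebra_simps)
  then show "zx = ((dx*zx + dy*zy)/(dx^2+dy^2)) * dx" using assms(1) by (simp add: field_simps)
  have "zy * (dx^2+dy^2) = (dx*zx + dy*zy) * dy" using assms(2)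
    by (simp add: power2_eq_square algebra_simps)
  then show "zy = ((dx*zx + dy*zy)/(dx^2+dy^2)) * dy" using assms(1) by (simp add: field_simps)
qed

lemma on_line:
  assumes "cross3 c d z = 0" "c \<noteq> d"
  shows "\<exists>s. z = (1-s) *\<^sub>R c + s *\<^sub>R d"
proof -
  define dx where "dx = Re d - Re c"
  define dy where "dy = Im d - Im c"
  define zx where "zx = Re z - Re c"
  define zy where "zy = Im z - Im c"
  define s where "s = (dx*zx + dy*zy)/(dx^2+dy^2)"
  have nz: "dx^2 + dy^2 \<noteq> 0"
    using assms(2) unfolding dx_def dy_def by (auto simp: complex_eq_iff)
  have h: "dx*zy = dy*zx" using assms(1) by (simp add: cross3_coord dx_def dy_def zx_def zy_def)
  have 1: "zx = s*dx" "zy = s*dy" using real_line_aux[OF nz h] unfolding s_def by auto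
  have "z = (1-s) *\<^sub>R c + s *\<^sub>R d"
    using 1 by (simp add: complex_eq_iff dx_def dy_def zx_def zy_def algebra_simps)
  then show ?thesis by blast
qed


lemma cross3_collinear:
  "cross3 ((1-s) *\<^sub>R c + s *\<^sub>R d) ((1-t) *\<^sub>R c + t *\<^sub>R d) ((1-u) *\<^sub>R c + u *\<^sub>R d) = 0"
proof -
  have 1: "((1-t) *\<^sub>R c + t *\<^sub>R d) - ((1-s) *\<^sub>R c + s *\<^sub>R d) = of_real (t-s) * (d - c)"
    by (simp add: scaleR_conv_of_real algebra_simps)
  have 2: "((1-u) *\<^sub>R c + u *\<^sub>R d) - ((1-s) *\<^sub>R c + s *\<^sub>R d) = of_real (u-s) * (d - c)"
    by (simp add: scaleR_conv_of_real algebra_simps)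
  have "cnj (of_real (t-s) * (d - c)) * (of_real (u-s) * (d - c)) = of_real ((t-s)*(u-s)) * (cnj (d-c) * (d-c))"
    by (simp add: algebra_simps)
  also have "cnj (d-c) * (d-c) = of_real (Re (d-c)^2 + Im (d-c)^2)"
    by (simp add: complex_eq_iff power2_eq_square algebra_simps)
  finally show ?thesis unfolding cross3_def 1 2 by (metis Im_complex_of_real of_real_mult)
qed

lemma cross3_diff: "cross3 a b y - cross3 a b x = -(cross3 x y b - cross3 x y a)"
  by (simp add: cross3_coord algebra_simps)

lemma sign_param:
  fixes \<alpha> \<beta> s :: real
  assumes "\<alpha> * \<beta> < 0" "(1-s)*\<alpha> + s*\<beta> = 0"
  shows "0 < s \<and> s < 1"
proof -
  have e: "\<alpha> = s*(\<alpha> - \<beta>)" using assms(2) by (simp add: algebra_simps)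
  have "\<alpha> \<noteq> \<beta>" using assms(1) by (auto simp: mult_less_0_iff)
  then have s: "s = \<alpha>/(\<alpha>-\<beta>)" using e by (simp add: field_simps)
  show ?thesis
  proof (cases "\<alpha> > 0")
    case True
    then have "\<beta> < 0" using assms(1) by (simp add: mult_less_0_iff)
    then show ?thesis using True unfolding s by (simp add: field_simps)
  next
    case False
    then have "\<alpha> < 0" "\<beta> > 0" using assms(1) by (auto simp: mult_less_0_iff)
    then show ?thesis unfolding s by (simp add: field_simps)
  qed
qed

lemma cross_int:
  assumes "cross3 c d a * cross3 c d b \<le> 0" "cross3 a b c * cross3 a b d < 0"
  shows "closed_segment c d \<inter> closed_segment a b \<noteq> {}"
proof -
  define \<gamma> where "\<gamma> = cross3 c d a"
  define \<delta> where "\<delta> = cross3 c d b"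
  have cd: "c \<noteq> d" using assms(2) by (auto simp: mult_less_0_iff)
  have gd: "\<gamma> \<noteq> \<delta>"
  proof
    assume "\<gamma> = \<delta>"
    moreover have "\<gamma> * \<delta> \<le> 0" using assms(1) unfolding \<gamma>_def \<delta>_def .
    ultimately have "\<gamma> * \<gamma> \<le> 0" by simp
    then have "\<gamma> = 0" by (auto simp: mult_le_0_iff)
    then have "\<gamma> = 0" "\<delta> = 0" using \<open>\<gamma> = \<delta>\<close> by auto
    then obtain sa sb where "a = (1-sa) *\<^sub>R c + sa *\<^sub>R d" "b = (1-sb) *\<^sub>R c + sb *\<^sub>R d"
      using on_line cd unfolding \<gamma>_def \<delta>_def by metis
    then have "cross3 a b c = 0" using cross3_collinear[of sa c d sb 0] by simp
    then show False using assms(2) by simp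
  qed
  define r where "r = \<gamma> / (\<gamma> - \<delta>)"
  have r01: "0 \<le> r \<and> r \<le> 1"
  proof -
    have "\<gamma> * \<delta> \<le> 0" using assms(1) unfolding \<gamma>_def \<delta>_def .
    then show ?thesis using gd unfolding r_def
      by (cases "\<gamma> > \<delta>") (auto simp: field_simps mult_le_0_iff)
  qed
  define q where "q = (1-r) *\<^sub>R a + r *\<^sub>R b"
  have "cross3 c d q = (1-r)*\<gamma> + r*\<delta>" unfolding q_def \<gamma>_def \<delta>_def by (rule cross3_comb)
  also have "\<dots> = 0" using gd unfolding r_def by (simp add: field_simps)
  finally obtain s where s: "q = (1-s) *\<^sub>R c + s *\<^sub>R d" using on_line cd by blast
  have "0 = cross3 a b q" unfolding q_def using cross3_comb[of a b r a b] by simp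
  also have "\<dots> = (1-s)*cross3 a b c + s*cross3 a b d" unfolding s by (rule cross3_comb)
  finally have "0 < s \<and> s < 1" using sign_param assms(2) by metis
  then have "q \<in> closed_segment c d" using s unfolding in_segment by (intro exI[of _ s]) auto
  moreover have "q \<in> closed_segment a b" using r01 unfolding q_def by (auto simp: in_segment)
  ultimately show ?thesis by blast
qed

lemma cross_at_vertex:
  assumes "v \<in> open_segment x y" "cross3 x y w \<noteq> 0"
  shows "cross3 v w x * cross3 v w y < 0"
proof -
  obtain t where t: "0 < t" "t < 1" "v = (1-t) *\<^sub>R x + t *\<^sub>R y" using assms(1) by (auto simp: in_segment)
  define K where "K = Im (cnj (w-v) * (y-x))"
  have e1: "cross3 v w x = -t*K" "cross3 v w y = (1-t)*K" "cross3 x y w = -K"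
    unfolding K_def t(3) by (simp_all add: cross3_coord algebra_simps)
  have "cross3 v w x * cross3 v w y = -(t*(1-t)) * (cross3 x y w)^2"
    unfolding e1 by (simp add: power2_eq_square algebra_simps)
  moreover have "t*(1-t) > 0" using t by simp
  ultimately show ?thesis using assms(2) by (simp add: mult_pos_pos)
qed

lemma cross_at_edge:
  assumes "w \<in> open_segment x y" "w \<in> closed_segment a b" "cross3 x y a * cross3 x y b < 0"
  shows "cross3 a b x * cross3 a b y < 0"
proof -
  obtain t where t: "0 < t" "t < 1" "w = (1-t) *\<^sub>R x + t *\<^sub>R y" using assms(1) by (auto simp: in_segment)
  obtain r where r: "w = (1-r) *\<^sub>R a + r *\<^sub>R b" using assms(2) by (auto simp: in_segment)
  have "cross3 a b w = 0" using cross3_comb[of a b r a b] r by simp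
  then have 1: "(1-t)*cross3 a b x + t*cross3 a b y = 0" using cross3_comb[of a b t x y] t(3) by simp
  have 2: "cross3 a b y - cross3 a b x \<noteq> 0" using cross3_diff[of a b y x] assms(3) by auto
  define A where "A = cross3 a b x"
  define B where "B = cross3 a b y"
  define K where "K = B - A"
  have e: "A = -t*K" "B = (1-t)*K" using 1 unfolding A_def B_def K_def by (simp_all add: algebra_simps)
  have "A*B = -(t*(1-t))*K^2" unfolding e by (simp add: power2_eq_square algebra_simps)
  then have "A*B = -(t*(1-t))*(B-A)^2" unfolding K_def .
  moreover have "t*(1-t) > 0" using t by simp
  moreover have "(B-A)^2 > 0" using 2 unfolding A_def B_def by simp
  ultimately show ?thesis unfolding A_def B_def by (simp add: mult_pos_pos)
qed

lemma onedim:
  assumes "p \<in> open_segment x y" "cross3 x y z = 0" "x \<notin> closed_segment p z" "y \<notin> closed_segment p z"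
  shows "z \<in> open_segment x y"
proof -
  have xy: "x \<noteq> y" using assms(1) by (auto simp: in_segment)
  obtain t where t: "0 < t" "t < 1" "p = (1-t) *\<^sub>R x + t *\<^sub>R y" using assms(1) by (auto simp: in_segment)
  obtain s where s: "z = (1-s) *\<^sub>R x + s *\<^sub>R y" using on_line assms(2) xy by blast
  consider "s \<le> 0" | "s \<ge> 1" | "0 < s \<and> s < 1" by linarith
  then show ?thesis
  proof cases
    case 1
    define r where "r = t/(t-s)"
    have "0 \<le> r" "r \<le> 1" using 1 t unfolding r_def by (auto simp: field_simps)
    moreover have "x = (1-r) *\<^sub>R p + r *\<^sub>R z"
    proof -
      have cc: "(1 - r) * t + r * s = 0" using 1 t unfolding r_def by (simp add: field_simps)
      have "(1-r) *\<^sub>R p + r *\<^sub>R z = x + ((1-r)*t + r * s) *\<^sub>R (y - x)"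
        unfolding t(3) s by (simp add: algebra_simps)
      then show ?thesis unfolding cc by simp
    qed
    ultimately have "x \<in> closed_segment p z" by (auto simp: in_segment)
    then show ?thesis using assms(3) by blast
  next
    case 2
    define r where "r = (1-t)/(s-t)"
    have "0 \<le> r" "r \<le> 1" using 2 t unfolding r_def by (auto simp: field_simps)
    moreover have "y = (1-r) *\<^sub>R p + r *\<^sub>R z"
    proof -
      have st: "s - t \<noteq> 0" using 2 t(2) by simp
      have "r * (s - t) = 1 - t" using st unfolding r_def by simp
      then have cc: "(1 - r) * t + r * s = 1" by (simp add: algebra_simps)
      have "(1-r) *\<^sub>R p + r *\<^sub>R z = x + ((1-r)*t + r * s) *\<^sub>R (y - x)"
        unfolding t(3) s by (simp add: algebra_simps)
      then show ?thesis unfolding cc by simp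
    qed
    ultimately have "y \<in> closed_segment p z" by (auto simp: in_segment)
    then show ?thesis using assms(4) by blast
  next
    case 3
    then show ?thesis using s xy by (auto simp: in_segment)
  qed
qed


lemma argmin_closed:
  fixes g :: "'a \<Rightarrow> real"
  assumes fin: "finite V" and SV: "S \<subseteq> V" and Sne: "S \<noteq> {}"
    and cl: "\<forall>u\<in>S. u \<notin> C \<longrightarrow> (\<forall>v. (u, v) \<in> E \<longrightarrow> v \<in> S)"
    and Hnn: "\<And>u v. u \<in> V - C \<Longrightarrow> v \<in> V \<Longrightarrow> lam u v \<ge> 0"
    and Hpos: "\<And>u v. u \<in> V - C \<Longrightarrow> v \<in> V \<Longrightarrow> lam u v > 0 \<longleftrightarrow> (u, v) \<in> E"
    and Hsum: "\<And>u. u \<in> V - C \<Longrightarrow> (\<Sum>v\<in>V. lam u v) = 1"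
    and harm: "\<And>u. u \<in> V - C \<Longrightarrow> g u = (\<Sum>v\<in>V. lam u v * g v)"
  shows "{u\<in>S. \<forall>v\<in>S. g u \<le> g v} \<noteq> {}"
    and "\<forall>u\<in>{u\<in>S. \<forall>v\<in>S. g u \<le> g v}. u \<notin> C \<longrightarrow> (\<forall>v. (u, v) \<in> E \<longrightarrow> v \<in> {u\<in>S. \<forall>v\<in>S. g u \<le> g v})"
proof -
  have fS: "finite S" using fin SV finite_subset by blast
  then have "Min (g ` S) \<in> g ` S" using Sne by simp
  then obtain m where m1: "m \<in> S" "g m = Min (g ` S)" by auto
  have "\<forall>v\<in>S. g m \<le> g v" using m1 fS by simp
  then show "{u\<in>S. \<forall>v\<in>S. g u \<le> g v} \<noteq> {}" using m1 by blast
  show "\<forall>u\<in>{u\<in>S. \<forall>v\<in>S. g u \<le> g v}. u \<notin> C \<longrightarrow> (\<forall>v. (u, v) \<in> E \<longrightarrow> v \<in> {u\<in>S. \<forall>v\<in>S. g u \<le> g v})"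
  proof (intro ballI impI allI)
    fix u v assume uM: "u \<in> {u\<in>S. \<forall>v\<in>S. g u \<le> g v}" and uC: "u \<notin> C" and uv: "(u, v) \<in> E"
    have uS: "u \<in> S" and umin: "\<forall>w\<in>S. g u \<le> g w" using uM by auto
    have uV: "u \<in> V - C" using uS SV uC by auto
    have vS: "v \<in> S" using cl uS uC uv by blast
    have vV: "v \<in> V" using vS SV by auto
    have terms: "\<forall>w\<in>V. 0 \<le> lam u w * (g w - g u)"
    proof
      fix w assume wV: "w \<in> V"
      show "0 \<le> lam u w * (g w - g u)"
      proof (cases "lam u w > 0")
        case True
        then have "(u, w) \<in> E" using Hpos[OF uV wV] by simp
        then have "w \<in> S" using cl uS uC by blast
        then show ?thesis using umin True by simp
      next
        case False
        then have "lam u w = 0" using Hnn[OF uV wV] by simp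
        then show ?thesis by simp
      qed
    qed
    have "(\<Sum>w\<in>V. lam u w * (g w - g u)) = (\<Sum>w\<in>V. lam u w * g w) - (\<Sum>w\<in>V. lam u w) * g u"
      by (simp add: right_diff_distrib sum_subtractf sum_distrib_right)
    also have "\<dots> = 0" using harm[OF uV] Hsum[OF uV] by simp
    finally have s0: "(\<Sum>w\<in>V. lam u w * (g w - g u)) = 0" .
    have "lam u v * (g v - g u) = 0"
      using sum_nonneg_0[OF fin _ s0 vV] terms by blast
    moreover have "lam u v > 0" using Hpos[OF uV vV] uv by simp
    ultimately have "g v = g u" by simp
    then show "v \<in> {u\<in>S. \<forall>v\<in>S. g u \<le> g v}" using vS umin by auto
  qed
qed

lemma reach_ext:
  fixes f :: "'a \<Rightarrow> complex"
  assumes fin: "finite V" and SV: "S \<subseteq> V" and Sne: "S \<noteq> {}"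
    and cl: "\<forall>u\<in>S. u \<notin> C \<longrightarrow> (\<forall>v. (u, v) \<in> E \<longrightarrow> v \<in> S)"
    and Hnn: "\<And>u v. u \<in> V - C \<Longrightarrow> v \<in> V \<Longrightarrow> lam u v \<ge> 0"
    and Hpos: "\<And>u v. u \<in> V - C \<Longrightarrow> v \<in> V \<Longrightarrow> lam u v > 0 \<longleftrightarrow> (u, v) \<in> E"
    and Hsum: "\<And>u. u \<in> V - C \<Longrightarrow> (\<Sum>v\<in>V. lam u v) = 1"
    and Hf: "\<And>u. u \<in> V - C \<Longrightarrow> f u = (\<Sum>v\<in>V. lam u v *\<^sub>R f v)"
    and inj: "inj_on f V" and irr: "\<forall>u. (u, u) \<notin> E"
  shows "S \<inter> C \<noteq> {}"
proof
  assume SC: "S \<inter> C = {}"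
  have hRe: "Re (f u) = (\<Sum>v\<in>V. lam u v * Re (f v))" if "u \<in> V - C" for u
    using Hf[OF that] by (simp add: Re_sum)
  have hIm: "Im (f u) = (\<Sum>v\<in>V. lam u v * Im (f v))" if "u \<in> V - C" for u
    using Hf[OF that] by (simp add: Im_sum)
  define M1 where "M1 = {u\<in>S. \<forall>v\<in>S. Re (f u) \<le> Re (f v)}"
  have M1: "M1 \<noteq> {}" "\<forall>u\<in>M1. u \<notin> C \<longrightarrow> (\<forall>v. (u, v) \<in> E \<longrightarrow> v \<in> M1)"
    using argmin_closed[OF fin SV Sne cl Hnn Hpos Hsum hRe] unfolding M1_def by blast+
  have M1V: "M1 \<subseteq> V" using SV unfolding M1_def by auto
  define M2 where "M2 = {u\<in>M1. \<forall>v\<in>M1. Im (f u) \<le> Im (f v)}"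
  have M2: "M2 \<noteq> {}" "\<forall>u\<in>M2. u \<notin> C \<longrightarrow> (\<forall>v. (u, v) \<in> E \<longrightarrow> v \<in> M2)"
    using argmin_closed[OF fin M1V M1(1) M1(2) Hnn Hpos Hsum hIm] unfolding M2_def by blast+
  obtain u where uM2: "u \<in> M2" using M2(1) by blast
  have uS: "u \<in> S" "u \<in> V" using uM2 SV unfolding M2_def M1_def by auto
  have uC: "u \<in> V - C" using uS SC by blast
  have "\<exists>v\<in>V. lam u v > 0"
  proof (rule ccontr)
    assume "\<not> (\<exists>v\<in>V. lam u v > 0)"
    then have "\<forall>v\<in>V. lam u v = 0" using Hnn[OF uC] by force
    then have "(\<Sum>v\<in>V. lam u v) = 0" by simp
    then show False using Hsum[OF uC] by simp
  qed
  then obtain v where vV: "v \<in> V" and "lam u v > 0" by blast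
  then have uv: "(u, v) \<in> E" using Hpos[OF uC vV] by simp
  then have vM2: "v \<in> M2" using M2(2) uM2 uC by blast
  have "u \<in> M1" "v \<in> M1" using uM2 vM2 unfolding M2_def by auto
  then have "Re (f u) = Re (f v)" unfolding M1_def by (auto intro: order_antisym)
  moreover have "Im (f u) = Im (f v)" using uM2 vM2 unfolding M2_def by (auto intro: order_antisym)
  ultimately have "f u = f v" by (simp add: complex_eq_iff)
  then have "u = v" using inj uS vV by (meson inj_onD)
  then show False using uv irr by simp
qed

lemma harm_cross:
  assumes "(\<Sum>v\<in>V. lam v) = 1" "z = (\<Sum>v\<in>V. lam v *\<^sub>R f v)"
  shows "cross3 a b z = (\<Sum>v\<in>V. lam v * cross3 a b (f v))"
proof -
  have e: "\<And>w. cross3 a b w = Im (cnj (b-a) * w) - Im (cnj (b-a) * a)"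
    by (simp add: cross3_def algebra_simps)
  have "(\<Sum>v\<in>V. lam v * cross3 a b (f v)) = (\<Sum>v\<in>V. lam v * Im (cnj (b-a) * f v)) - (\<Sum>v\<in>V. lam v) * Im (cnj (b-a) * a)"
    unfolding e by (simp add: right_diff_distrib sum_subtractf sum_distrib_right)
  also have "(\<Sum>v\<in>V. lam v * Im (cnj (b-a) * f v)) = Im (cnj (b-a) * z)"
  proof -
    have "\<And>v. Im (cnj (b-a) * (lam v *\<^sub>R f v)) = lam v * Im (cnj (b-a) * f v)"
      by (simp add: scaleR_conv_of_real mult.left_commute)
    then show ?thesis unfolding assms(2) sum_distrib_left Im_sum by simp
  qed
  finally show ?thesis using assms(1) e by simp
qed


lemma real_sign_aux:
  fixes p q r :: real
  assumes "p * q \<ge> 0" "p \<noteq> 0" "(1-r)*p + r*q = 0" "0 \<le> r" "r \<le> 1"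
  shows "r = 1"
proof (rule ccontr)
  assume "r \<noteq> 1"
  then have r1: "1 - r > 0" using assms(5) by simp
  show False
  proof (cases "p > 0")
    case True
    then have "q \<ge> 0" using assms(1) by (simp add: zero_le_mult_iff)
    then have "(1-r)*p + r*q > 0" using True r1 assms(4) by (simp add: add_pos_nonneg)
    then show False using assms(3) by simp
  next
    case False
    then have p: "p < 0" using assms(2) by simp
    then have "q \<le> 0" using assms(1) by (simp add: zero_le_mult_iff)
    then have "(1-r)*p + r*q < 0" using p r1 assms(4)
      by (simp add: add_neg_nonpos mult_nonneg_nonpos mult_pos_neg)
    then show False using assms(3) by simp
  qed
qed

lemma ray_cross:
  assumes "\<sigma> * \<sigma> = 1"
  shows "\<sigma> * cross3 a b (z + of_real t * (- (of_real \<sigma> * \<i> * (b - a))))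
        = \<sigma> * cross3 a b z - t * ((Re b - Re a)^2 + (Im b - Im a)^2)"
proof -
  have "cross3 a b (z + of_real t * (- (of_real \<sigma> * \<i> * (b - a))))
        = cross3 a b z - t * \<sigma> * ((Re b - Re a)^2 + (Im b - Im a)^2)"
    by (simp add: cross3_coord power2_eq_square algebra_simps)
  moreover have "\<And>X C N :: real. X = C - t * \<sigma> * N \<Longrightarrow> \<sigma> * X = \<sigma> * C - t * N"
  proof -
    fix X C N :: real assume xe: "X = C - t * \<sigma> * N"
    have "\<sigma> * X = \<sigma> * C - t * (\<sigma> * \<sigma>) * N" unfolding xe by (simp add: right_diff_distrib mult_ac)
    then show "\<sigma> * X = \<sigma> * C - t * N" using assms by simp
  qed
  ultimately show ?thesis by blast
qed

lemma cont_cross3_2: "continuous_on UNIV (\<lambda>y. cross3 x y a)"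
  unfolding cross3_coord by (intro continuous_intros)

lemma cont_cross3_3: "continuous_on UNIV (\<lambda>y. cross3 a b y)"
  unfolding cross3_coord by (intro continuous_intros)

lemma open_neg:
  assumes "continuous_on UNIV g" shows "open {y. (g y :: real) < 0}"
  using open_Collect_less[OF assms continuous_on_const] by simp

lemma open_pos:
  assumes "continuous_on UNIV g" shows "open {y. (g y :: real) > 0}"
  using open_Collect_less[OF continuous_on_const assms] by simp

lemma drawing_closed:
  assumes "finite V" "E \<subseteq> V \<times> V"
  shows "closed (straight_drawing V E f)"
proof -
  have "finite E" using assms finite_subset by blast
  then have "closed (\<Union>(u, v)\<in>E. closed_segment (f u) (f v))"
    by (intro closed_Union) auto
  moreover have "closed (f ` V)" using assms(1) by (simp add: finite_imp_closed)
  ultimately show ?thesis unfolding straight_drawing_def by (intro closed_Un)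
qed

lemma seg_in_drawing:
  "(u, v) \<in> E \<Longrightarrow> closed_segment (f u) (f v) \<subseteq> straight_drawing V E f"
  unfolding straight_drawing_def by blast


lemma sum_pos_witness:
  fixes lam g :: "'a \<Rightarrow> real"
  assumes fin: "finite V" and nn: "\<forall>u\<in>V. lam u \<ge> 0" and s: "(\<Sum>u\<in>V. lam u * g u) = 0"
    and u0: "u0 \<in> V" "lam u0 > 0" "g u0 \<noteq> 0"
  shows "\<exists>u\<in>V. lam u > 0 \<and> g u > 0"
proof (rule ccontr)
  assume nt: "\<not> (\<exists>u\<in>V. lam u > 0 \<and> g u > 0)"
  have t: "\<forall>u\<in>V. 0 \<le> - (lam u * g u)"
  proof
    fix u assume uV: "u \<in> V"
    show "0 \<le> - (lam u * g u)"
    proof (cases "lam u > 0")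
      case True
      then have "g u \<le> 0" using nt uV by auto
      then show ?thesis using True by (simp add: mult_nonneg_nonpos)
    next
      case False
      then have "lam u = 0" using nn uV by force
      then show ?thesis by simp
    qed
  qed
  have s': "(\<Sum>u\<in>V. - (lam u * g u)) = 0" using s by (simp add: sum_negf)
  have "- (lam u0 * g u0) = 0"
    by (rule sum_nonneg_0[where f="\<lambda>u. - (lam u * g u)", OF fin _ s' u0(1)]) (use t in blast)
  then show False using u0 by simp
qed

lemma components_helpers:
  fixes D :: "complex set"
  assumes "F \<in> components (- D)" "closed D"
  shows "F \<subseteq> - D" "open F" "connected F"
proof -
  show "F \<subseteq> - D" by (rule in_components_subset[OF assms(1)])
  have "open (- D)" using assms(2) by (simp add: open_Compl)
  then show "open F" by (rule open_components[OF _ assms(1)])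
  show "connected F" by (rule in_components_connected[OF assms(1)])
qed


theorem lemma1p3:
  fixes V :: "'a set" and E :: "('a \<times> 'a) set"
    and p :: "'a \<Rightarrow> complex" and \<gamma> :: "'a \<Rightarrow> 'a \<Rightarrow> real \<Rightarrow> complex"
    and cs :: "'a list" and f :: "'a \<Rightarrow> complex"
  assumes "simple_graph V E"
    and "plane_embedding V E p \<gamma>"
    and "external_boundary_cycle V E p \<gamma> cs"
    and "convex_combination_map V E cs f"
    and "straight_line_embedding V E f"
    and "F \<in> straight_faces V E f"
    and "bounded F"
  shows "convex F"
proof -
  have fin: "finite V" and EV: "E \<subseteq> V \<times> V" and irr: "\<forall>u. (u, u) \<notin> E"
    using assms(1) unfolding simple_graph_def by auto
  have gc: "graph_cycle V E cs" using assms(3) unfolding external_boundary_cycle_def by auto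
  have dist: "distinct cs" and n3: "length cs \<ge> 3" and csV: "set cs \<subseteq> V"
    using gc unfolding graph_cycle_def by auto
  have cpc: "convex_polygon_corners (\<lambda>i. f (cs ! i)) (length cs)"
    using assms(4) unfolding convex_combination_map_def by auto
  obtain lam :: "'a \<Rightarrow> 'a \<Rightarrow> real" where H: "\<forall>u \<in> V - set cs.
          (\<forall>v\<in>V. lam u v \<ge> 0 \<and> (lam u v > 0 \<longleftrightarrow> (u, v) \<in> E)) \<and>
          (\<Sum>v\<in>V. lam u v) = 1 \<and>
          f u = (\<Sum>v\<in>V. lam u v *\<^sub>R f v)"
    using assms(4) unfolding convex_combination_map_def by auto
  have Hnn: "\<And>u v. u \<in> V - set cs \<Longrightarrow> v \<in> V \<Longrightarrow> lam u v \<ge> 0" using H by auto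
  have Hpos: "\<And>u v. u \<in> V - set cs \<Longrightarrow> v \<in> V \<Longrightarrow> lam u v > 0 \<longleftrightarrow> (u, v) \<in> E" using H by auto
  have Hsum: "\<And>u. u \<in> V - set cs \<Longrightarrow> (\<Sum>v\<in>V. lam u v) = 1" using H by auto
  have Hf: "\<And>u. u \<in> V - set cs \<Longrightarrow> f u = (\<Sum>v\<in>V. lam u v *\<^sub>R f v)" using H by auto
  have inj: "inj_on f V" using assms(5) unfolding straight_line_embedding_def by auto
  define n where "n = length cs"
  define q where "q = (\<lambda>i. f (cs ! i))"
  define nx where "nx = (\<lambda>i. (i + 1) mod n)"
  have n3': "n \<ge> 3" using n3 unfolding n_def .
  obtain \<sigma> :: real where sig: "\<sigma> * \<sigma> = 1"
    and conv: "\<forall>i<n. \<forall>j<n. j \<noteq> i \<and> j \<noteq> nx i \<longrightarrow> \<sigma> * cross3 (q i) (q (nx i)) (q j) > 0"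
  proof -
    have "(\<forall>i<n. \<forall>j<n. j \<noteq> i \<and> j \<noteq> nx i \<longrightarrow> cross3 (q i) (q (nx i)) (q j) > 0) \<or>
      (\<forall>i<n. \<forall>j<n. j \<noteq> i \<and> j \<noteq> nx i \<longrightarrow> cross3 (q i) (q (nx i)) (q j) < 0)"
      using cpc unfolding convex_polygon_corners_def n_def q_def nx_def by simp
    then show ?thesis
    proof
      assume "\<forall>i<n. \<forall>j<n. j \<noteq> i \<and> j \<noteq> nx i \<longrightarrow> cross3 (q i) (q (nx i)) (q j) > 0"
      then show ?thesis using that[of 1] by simp
    next
      assume "\<forall>i<n. \<forall>j<n. j \<noteq> i \<and> j \<noteq> nx i \<longrightarrow> cross3 (q i) (q (nx i)) (q j) < 0"
      then show ?thesis using that[of "-1"] by simp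
    qed
  qed
  define D where "D = straight_drawing V E f"
  define psi where "psi = (\<lambda>i z. \<sigma> * cross3 (q i) (q (nx i)) z)"
  have csn: "\<And>k. k < n \<Longrightarrow> cs ! k \<in> V" using csV unfolding n_def by auto
  have nxn: "\<And>i. i < n \<Longrightarrow> nx i < n" using n3' unfolding nx_def by simp
  have nxi: "\<And>i. i < n \<Longrightarrow> nx i \<noteq> i"
  proof -
    fix i assume i: "i < n"
    show "nx i \<noteq> i"
    proof (cases "i + 1 < n")
      case True then show ?thesis unfolding nx_def by simp
    next
      case False then have "i + 1 = n" using i by simp
      then show ?thesis using n3' unfolding nx_def by simp
    qed
  qed
  have psi_self: "\<And>i. psi i (q i) = 0" "\<And>i. psi i (q (nx i)) = 0" unfolding psi_def by simp_all
  have Vne: "V \<noteq> {}" using csV n3 by (metis empty_iff list.size(3) not_numeral_le_zero set_empty subset_empty)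
  have Dsub: "\<forall>i<n. \<forall>z\<in>D. psi i z \<ge> 0"
  proof (intro allI impI ballI)
    fix i z assume i: "i < n" and zD: "z \<in> D"
    define g where "g = (\<lambda>v. psi i (f v))"
    have harm: "g u = (\<Sum>v\<in>V. lam u v * g v)" if "u \<in> V - set cs" for u
    proof -
      have "cross3 (q i) (q (nx i)) (f u) = (\<Sum>v\<in>V. lam u v * cross3 (q i) (q (nx i)) (f v))"
        by (rule harm_cross[OF Hsum[OF that] Hf[OF that]])
      then show ?thesis unfolding g_def psi_def by (simp add: sum_distrib_left mult_ac)
    qed
    have clV: "\<forall>u\<in>V. u \<notin> set cs \<longrightarrow> (\<forall>v. (u, v) \<in> E \<longrightarrow> v \<in> V)" using EV by blast
    define M where "M = {u\<in>V. \<forall>v\<in>V. g u \<le> g v}"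
    have M: "M \<noteq> {}" "\<forall>u\<in>M. u \<notin> set cs \<longrightarrow> (\<forall>v. (u, v) \<in> E \<longrightarrow> v \<in> M)"
      using argmin_closed[OF fin subset_refl Vne clV Hnn Hpos Hsum harm] unfolding M_def by blast+
    have MV: "M \<subseteq> V" unfolding M_def by auto
    have "M \<inter> set cs \<noteq> {}" by (rule reach_ext[OF fin MV M(1) M(2) Hnn Hpos Hsum Hf inj irr])
    then obtain c where cM: "c \<in> M" and cc: "c \<in> set cs" by blast
    then obtain k where k: "k < n" "c = cs ! k" unfolding n_def by (metis in_set_conv_nth)
    have gc0: "g c \<ge> 0"
    proof -
      have gq: "g c = psi i (q k)" unfolding g_def q_def k(2) ..
      consider "k = i" | "k = nx i" | "k \<noteq> i \<and> k \<noteq> nx i" by blast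
      then show ?thesis
      proof cases
        case 1 then show ?thesis using gq psi_self by simp
      next
        case 2 then show ?thesis using gq psi_self by simp
      next
        case 3
        then have "\<sigma> * cross3 (q i) (q (nx i)) (q k) > 0" using conv i k(1) by blast
        then show ?thesis using gq unfolding psi_def by simp
      qed
    qed
    have gV: "\<forall>v\<in>V. g v \<ge> 0" using cM gc0 unfolding M_def by force
    have "z \<in> f ` V \<or> (\<exists>(u, v)\<in>E. z \<in> closed_segment (f u) (f v))"
      using zD unfolding D_def straight_drawing_def by blast
    then show "psi i z \<ge> 0"
    proof
      assume "z \<in> f ` V"
      then show ?thesis using gV unfolding g_def by auto
    next
      assume "\<exists>(u, v)\<in>E. z \<in> closed_segment (f u) (f v)"
      then obtain u v where uv: "(u, v) \<in> E" and zs: "z \<in> closed_segment (f u) (f v)" by blast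
      have "u \<in> V" "v \<in> V" using uv EV by auto
      then have gu: "g u \<ge> 0" "g v \<ge> 0" using gV by auto
      obtain t where t: "0 \<le> t" "t \<le> 1" "z = (1-t) *\<^sub>R f u + t *\<^sub>R f v" using zs by (auto simp: in_segment)
      have "psi i z = (1-t) * g u + t * g v"
        unfolding t(3) g_def psi_def cross3_comb by (simp add: algebra_simps)
      then show ?thesis using gu t by simp
    qed
  qed
  have Dclosed: "closed D" unfolding D_def by (rule drawing_closed[OF fin EV])
  have FD: "F \<in> components (- D)" using assms(6) unfolding D_def straight_faces_def .
  note Fh = components_helpers[OF FD Dclosed]
  have qne: "\<And>i. i < n \<Longrightarrow> q i \<noteq> q (nx i)"
  proof -
    fix i assume i: "i < n"
    have "cs ! i \<noteq> cs ! nx i" using dist i nxn[OF i] nxi[OF i] unfolding n_def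
      by (simp add: nth_eq_iff_index_eq)
    then show "q i \<noteq> q (nx i)" using inj csn[OF i] csn[OF nxn[OF i]] unfolding q_def
      by (meson inj_onD)
  qed
  have Fint: "\<forall>z\<in>F. \<forall>i<n. psi i z > 0"
  proof (intro ballI allI impI, rule ccontr)
    fix z i assume zF: "z \<in> F" and i: "i < n" and nz: "\<not> psi i z > 0"
    define a where "a = q i"
    define b where "b = q (nx i)"
    define d where "d = - (of_real \<sigma> * \<i> * (b - a))"
    define N where "N = (Re b - Re a)^2 + (Im b - Im a)^2"
    have ab: "a \<noteq> b" using qne[OF i] unfolding a_def b_def .
    have Npos: "N > 0" using ab unfolding N_def by (auto simp: complex_eq_iff add_pos_nonneg add_nonneg_pos)
    have s0: "\<sigma> \<noteq> 0" using sig by auto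
    have d0: "d \<noteq> 0" using ab s0 unfolding d_def by simp
    have pray: "psi i (z + of_real t * d) = psi i z - t * N" for t
      unfolding psi_def d_def N_def a_def[symmetric] b_def[symmetric] by (rule ray_cross[OF sig])
    define R where "R = (\<lambda>t. z + of_real t * d) ` {0..}"
    have connR: "connected R" unfolding R_def
      by (intro connected_continuous_image continuous_intros) (simp add: is_interval_connected is_interval_ci)
    have RD: "R \<subseteq> - D"
    proof
      fix w assume "w \<in> R"
      then obtain t where t: "t \<ge> 0" "w = z + of_real t * d" unfolding R_def by auto
      show "w \<in> - D"
      proof (cases "t = 0")
        case True then show ?thesis using t zF Fh(1) by auto
      next
        case False
        then have "t * N > 0" using t Npos by simp
        then have "psi i w < 0" using pray t nz by simp
        then show ?thesis using Dsub i by force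
      qed
    qed
    have "z \<in> R" unfolding R_def by (rule image_eqI[of _ _ 0]) auto
    then have "F \<inter> R \<noteq> {}" using zF by blast
    then have RF: "R \<subseteq> F" by (rule components_maximal[OF FD connR RD])
    then have "bounded R" using assms(7) bounded_subset by blast
    then obtain B where B: "\<forall>w\<in>R. norm w \<le> B" unfolding bounded_iff by blast
    have zB: "norm z \<le> B" using B \<open>z \<in> R\<close> by blast
    define t where "t = (B + norm z + 1) / norm d"
    have "B + norm z + 1 \<ge> 0" using zB norm_ge_zero[of z] by linarith
    then have t0: "t \<ge> 0" unfolding t_def by simp
    have "z + of_real t * d \<in> R" unfolding R_def using t0 by auto
    then have le: "norm (z + of_real t * d) \<le> B" using B by blast
    have "norm (of_real t * d) = t * norm d" using t0 by (simp add: norm_mult)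
    also have "\<dots> = B + norm z + 1" unfolding t_def using d0 by simp
    finally have "norm (of_real t * d) = B + norm z + 1" .
    moreover have "norm (of_real t * d) \<le> norm (z + of_real t * d) + norm z"
      by (metis add_diff_cancel_left' norm_triangle_ineq4 add.commute)
    ultimately show False using le by simp
  qed
  have seg: "\<forall>x\<in>F. \<forall>y\<in>F. closed_segment x y \<subseteq> F"
  proof
    fix x assume xF: "x \<in> F"
    define S where "S = {y. closed_segment x y \<subseteq> F}"
    have opA: "\<forall>y\<in>S. \<exists>T. open T \<and> y \<in> T \<and> T \<subseteq> S"
    proof
      fix y assume yS: "y \<in> S"
      then have sF: "closed_segment x y \<subseteq> F" unfolding S_def by simp
      obtain e where e: "e > 0" "(\<Union>k\<in>closed_segment x y. ball k e) \<subseteq> F"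
        using compact_subset_open_imp_ball_epsilon_subset[OF compact_segment Fh(2) sF] by blast
      have "ball y e \<subseteq> S"
      proof
        fix y' assume y': "y' \<in> ball y e"
        show "y' \<in> S" unfolding S_def mem_Collect_eq
        proof
          fix p assume "p \<in> closed_segment x y'"
          then obtain u where u: "0 \<le> u" "u \<le> 1" "p = (1-u) *\<^sub>R x + u *\<^sub>R y'" by (auto simp: in_segment)
          define p0 where "p0 = (1-u) *\<^sub>R x + u *\<^sub>R y"
          have p0s: "p0 \<in> closed_segment x y" unfolding p0_def using u by (auto simp: in_segment)
          have "dist p0 p = norm (u *\<^sub>R (y - y'))" unfolding p0_def u(3) dist_norm
            by (simp add: algebra_simps)
          also have "\<dots> = u * norm (y - y')" using u by simp
          also have "\<dots> \<le> norm (y - y')" using u by (simp add: mult_left_le_one_le)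
          also have "\<dots> < e" using y' by (simp add: dist_norm)
          finally have "p \<in> ball p0 e" by simp
          then show "p \<in> F" using e(2) p0s by blast
        qed
      qed
      then show "\<exists>T. open T \<and> y \<in> T \<and> T \<subseteq> S" using e(1) by (intro exI[of _ "ball y e"]) auto
    qed
    have opB: "\<forall>y\<in>F - S. \<exists>T. open T \<and> y \<in> T \<and> T \<inter> S = {}"
    proof
      fix y assume yFS: "y \<in> F - S"
      have yF: "y \<in> F" and yS: "y \<notin> S" using yFS by auto
      have xD: "x \<notin> D" and yD: "y \<notin> D" using xF yF Fh(1) by auto
      have "\<exists>w. w \<in> open_segment x y \<and> w \<in> D"
      proof (rule ccontr)
        assume "\<not> (\<exists>w. w \<in> open_segment x y \<and> w \<in> D)"
        then have "closed_segment x y \<subseteq> - D" using xD yD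
          by (auto simp: open_segment_def)
        moreover have "F \<inter> closed_segment x y \<noteq> {}" using xF by auto
        ultimately have "closed_segment x y \<subseteq> F"
          using components_maximal[OF FD connected_segment] by blast
        then show False using yS unfolding S_def by simp
      qed
      then obtain w where wxy: "w \<in> open_segment x y" and wD: "w \<in> D" by blast
      define Blk where "Blk = (\<lambda>y'. \<exists>a b. closed_segment a b \<subseteq> D \<and>
          cross3 x y' a * cross3 x y' b \<le> 0 \<and> cross3 a b x * cross3 a b y' < 0)"
      have BlkS: "y' \<notin> S" if "Blk y'" for y'
      proof
        assume "y' \<in> S"
        then have sF: "closed_segment x y' \<subseteq> F" unfolding S_def by simp
        obtain a b where ab: "closed_segment a b \<subseteq> D" "cross3 x y' a * cross3 x y' b \<le> 0"
          "cross3 a b x * cross3 a b y' < 0" using \<open>Blk y'\<close> unfolding Blk_def by blast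
        have "closed_segment x y' \<inter> closed_segment a b \<noteq> {}" by (rule cross_int[OF ab(2,3)])
        then show False using sF ab(1) Fh(1) by blast
      qed
      define hh where "hh = (\<lambda>z. cross3 x y z)"
      have xy: "x \<noteq> y" using wxy by (auto simp: in_segment)
      have hw: "hh w = 0"
      proof -
        obtain t where "w = (1-t) *\<^sub>R x + t *\<^sub>R y" using wxy by (auto simp: in_segment)
        then show ?thesis unfolding hh_def by (simp add: cross3_comb)
      qed
      have "\<exists>T. open T \<and> y \<in> T \<and> (\<forall>y'\<in>T. Blk y')"
      proof (cases "\<exists>a b. (a, b) \<in> E \<and> hh (f a) * hh (f b) < 0 \<and>
                   (\<exists>w'. w' \<in> closed_segment (f a) (f b) \<and> w' \<in> open_segment x y)")
        case True
        then obtain a b w' where ab: "(a, b) \<in> E" "hh (f a) * hh (f b) < 0"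
          "w' \<in> closed_segment (f a) (f b)" "w' \<in> open_segment x y" by blast
        define A where "A = f a"
        define B where "B = f b"
        have c1: "cross3 A B x * cross3 A B y < 0"
          using cross_at_edge[OF ab(4) ab(3)] ab(2) unfolding A_def B_def hh_def by simp
        define T where "T = {y'. cross3 x y' A * cross3 x y' B < 0} \<inter> {y'. cross3 A B x * cross3 A B y' < 0}"
        have "open T" unfolding T_def
          by (intro open_Int open_neg continuous_on_mult cont_cross3_2 cont_cross3_3 continuous_on_const)
        moreover have "y \<in> T" unfolding T_def using ab(2) c1 unfolding hh_def A_def B_def by simp
        moreover have "\<forall>y'\<in>T. Blk y'"
        proof
          fix y' assume "y' \<in> T"
          then have "cross3 x y' A * cross3 x y' B \<le> 0" "cross3 A B x * cross3 A B y' < 0"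
            unfolding T_def by auto
          moreover have "closed_segment A B \<subseteq> D" unfolding A_def B_def D_def by (rule seg_in_drawing[OF ab(1)])
          ultimately show "Blk y'" unfolding Blk_def by blast
        qed
        ultimately show ?thesis by blast
      next
        case notC1: False
        show ?thesis
        proof (cases "\<exists>v\<in>V - set cs. f v \<in> open_segment x y \<and> (\<exists>u. (v, u) \<in> E \<and> hh (f u) \<noteq> 0)")
          case True
          then obtain v u0 where v: "v \<in> V - set cs" "f v \<in> open_segment x y" "(v, u0) \<in> E" "hh (f u0) \<noteq> 0"
            by blast
          have u0V: "u0 \<in> V" using v(3) EV by auto
          have hv: "hh (f v) = 0"
          proof -
            obtain t where "f v = (1-t) *\<^sub>R x + t *\<^sub>R y" using v(2) by (auto simp: in_segment)
            then show ?thesis unfolding hh_def by (simp add: cross3_comb)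
          qed
          have sum0: "(\<Sum>u\<in>V. lam v u * hh (f u)) = 0"
            using harm_cross[OF Hsum[OF v(1)] Hf[OF v(1)], of x y] hv unfolding hh_def by simp
          have nnv: "\<forall>u\<in>V. lam v u \<ge> 0" using Hnn[OF v(1)] by blast
          have lpos: "lam v u0 > 0" using Hpos[OF v(1) u0V] v(3) by simp
          obtain w1 where w1: "w1 \<in> V" "lam v w1 > 0" "hh (f w1) > 0"
            using sum_pos_witness[OF fin nnv sum0 u0V lpos v(4)] by blast
          have sum0': "(\<Sum>u\<in>V. lam v u * (- hh (f u))) = 0" using sum0 by (simp add: sum_negf)
          obtain w2 where w2: "w2 \<in> V" "lam v w2 > 0" "- hh (f w2) > 0"
            using sum_pos_witness[OF fin nnv sum0' u0V lpos] v(4) by auto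
          have e1: "(v, w1) \<in> E" using Hpos[OF v(1) w1(1)] w1(2) by simp
          have e2: "(v, w2) \<in> E" using Hpos[OF v(1) w2(1)] w2(2) by simp
          define P where "P = f v"
          define W1 where "W1 = f w1"
          define W2 where "W2 = f w2"
          have c1: "cross3 P W1 x * cross3 P W1 y < 0"
            using cross_at_vertex[OF v(2)] w1(3) unfolding P_def W1_def hh_def by simp
          have c2: "cross3 P W2 x * cross3 P W2 y < 0"
            using cross_at_vertex[OF v(2)] w2(3) unfolding P_def W2_def hh_def by simp
          define T where "T = {y'. cross3 x y' W1 > 0} \<inter> {y'. cross3 x y' W2 < 0} \<inter>
              {y'. cross3 P W1 x * cross3 P W1 y' < 0} \<inter> {y'. cross3 P W2 x * cross3 P W2 y' < 0}"
          have "open T" unfolding T_def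
            by (intro open_Int open_neg open_pos continuous_on_mult cont_cross3_2 cont_cross3_3 continuous_on_const)
          moreover have "y \<in> T" unfolding T_def using c1 c2 w1(3) w2(3) unfolding hh_def W1_def W2_def by simp
          moreover have "\<forall>y'\<in>T. Blk y'"
          proof
            fix y' assume "y' \<in> T"
            then have t: "cross3 x y' W1 > 0" "cross3 x y' W2 < 0" "cross3 P W1 x * cross3 P W1 y' < 0"
              "cross3 P W2 x * cross3 P W2 y' < 0" unfolding T_def by auto
            have s1: "closed_segment P W1 \<subseteq> D" unfolding P_def W1_def D_def by (rule seg_in_drawing[OF e1])
            have s2: "closed_segment P W2 \<subseteq> D" unfolding P_def W2_def D_def by (rule seg_in_drawing[OF e2])
            show "Blk y'"
            proof (cases "cross3 x y' P \<ge> 0")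
              case True
              then have "cross3 x y' P * cross3 x y' W2 \<le> 0" using t(2) by (simp add: mult_nonneg_nonpos)
              then show ?thesis unfolding Blk_def using s2 t(4) by blast
            next
              case False
              then have "cross3 x y' P * cross3 x y' W1 \<le> 0" using t(1)
                by (simp add: mult_nonpos_nonneg)
              then show ?thesis unfolding Blk_def using s1 t(3) by blast
            qed
          qed
          ultimately show ?thesis by blast
        next
          case notC2: False
          define W where "W = {v\<in>V. f v \<in> open_segment x y}"
          have WV: "W \<subseteq> V" unfolding W_def by auto
          have Wcl: "\<forall>v\<in>W. v \<notin> set cs \<longrightarrow> (\<forall>u. (v, u) \<in> E \<longrightarrow> u \<in> W)"
          proof (intro ballI impI allI)
            fix v u assume vW: "v \<in> W" and vc: "v \<notin> set cs" and vu: "(v, u) \<in> E"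
            have vV: "v \<in> V - set cs" and fv: "f v \<in> open_segment x y" using vW vc unfolding W_def by auto
            have uV: "u \<in> V" using vu EV by auto
            have hu: "hh (f u) = 0" using notC2 vV fv vu by blast
            have sD: "closed_segment (f v) (f u) \<subseteq> D" unfolding D_def by (rule seg_in_drawing[OF vu])
            have "f u \<in> open_segment x y"
              by (rule onedim[OF fv]) (use hu sD xD yD in \<open>auto simp: hh_def\<close>)
            then show "u \<in> W" using uV unfolding W_def by simp
          qed
          have Wne: "W \<noteq> {}"
          proof -
            have "w \<in> f ` V \<or> (\<exists>(a, b)\<in>E. w \<in> closed_segment (f a) (f b))"
              using wD unfolding D_def straight_drawing_def by blast
            then show ?thesis
            proof
              assume "w \<in> f ` V"
              then show ?thesis using wxy unfolding W_def by auto
            next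
              assume "\<exists>(a, b)\<in>E. w \<in> closed_segment (f a) (f b)"
              then obtain a b where ab: "(a, b) \<in> E" "w \<in> closed_segment (f a) (f b)" by blast
              have aV: "a \<in> V" and bV: "b \<in> V" using ab(1) EV by auto
              have nn: "hh (f a) * hh (f b) \<ge> 0" using notC1 ab wxy by (meson not_le)
              obtain r where r: "0 \<le> r" "r \<le> 1" "w = (1-r) *\<^sub>R f a + r *\<^sub>R f b"
                using ab(2) by (auto simp: in_segment)
              have hr: "(1-r) * hh (f a) + r * hh (f b) = 0" using hw unfolding r(3) hh_def cross3_comb .
              show ?thesis
              proof (cases "hh (f a) = 0")
                case True
                have "closed_segment w (f a) \<subseteq> closed_segment (f a) (f b)"
                  by (rule closed_segment_subset[OF ab(2) ends_in_segment(1) convex_closed_segment])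
                moreover have "closed_segment (f a) (f b) \<subseteq> D" unfolding D_def by (rule seg_in_drawing[OF ab(1)])
                ultimately have sD: "closed_segment w (f a) \<subseteq> D" by blast
                have "f a \<in> open_segment x y"
                  by (rule onedim[OF wxy]) (use True sD xD yD in \<open>auto simp: hh_def\<close>)
                then show ?thesis using aV unfolding W_def by blast
              next
                case False
                have "r = 1" by (rule real_sign_aux[OF nn False hr r(1) r(2)])
                then have "w = f b" using r(3) by simp
                then show ?thesis using wxy bV unfolding W_def by blast
              qed
            qed
          qed
          have "W \<inter> set cs \<noteq> {}" by (rule reach_ext[OF fin WV Wne Wcl Hnn Hpos Hsum Hf inj irr])
          then obtain c where cW: "c \<in> W" and cc: "c \<in> set cs" by blast
          then obtain k where k: "k < n" "c = cs ! k" unfolding n_def by (metis in_set_conv_nth)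
          have "q k \<in> open_segment x y" using cW k(2) unfolding W_def q_def by simp
          then obtain t where t: "0 < t" "t < 1" "q k = (1-t) *\<^sub>R x + t *\<^sub>R y" by (auto simp: in_segment)
          have cz: "cross3 a b z = (1-t) * cross3 a b x + t * cross3 a b y"
            if "z = (1-t) *\<^sub>R x + t *\<^sub>R y" for a b z using that cross3_comb by simp
          have "psi k (q k) = (1-t) * psi k x + t * psi k y"
            unfolding psi_def cz[OF t(3)] by (simp add: algebra_simps)
          moreover have "psi k x > 0" "psi k y > 0" using Fint xF yF k(1) by auto
          ultimately have "psi k (q k) > 0" using t by (simp add: add_pos_pos)
          then show ?thesis using psi_self by simp
        qed
      qed
      then obtain T where "open T" "y \<in> T" "\<forall>y'\<in>T. Blk y'" by blast
      then show "\<exists>T. open T \<and> y \<in> T \<and> T \<inter> S = {}" using BlkS by blast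
    qed
    define A where "A = \<Union>{T. open T \<and> T \<subseteq> S}"
    define B where "B = \<Union>{T. open T \<and> T \<inter> S = {}}"
    have oA: "open A" unfolding A_def by (rule open_Union) auto
    have oB: "open B" unfolding B_def by (rule open_Union) auto
    have AS: "A \<subseteq> S" unfolding A_def by auto
    have BS: "B \<inter> S = {}" unfolding B_def by auto
    have "A \<inter> B \<inter> F = {}" using AS BS by blast
    moreover have "F \<subseteq> A \<union> B"
    proof
      fix y assume yF: "y \<in> F"
      show "y \<in> A \<union> B"
      proof (cases "y \<in> S")
        case True
        then obtain T where "open T" "y \<in> T" "T \<subseteq> S" using opA by blast
        then show ?thesis unfolding A_def by blast
      next
        case False
        then obtain T where "open T" "y \<in> T" "T \<inter> S = {}" using opB yF by blast
        then show ?thesis unfolding B_def by blast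
      qed
    qed
    ultimately have disj: "A \<inter> F = {} \<or> B \<inter> F = {}" using connectedD[OF Fh(3) oA oB] by blast
    have "x \<in> S" unfolding S_def using xF by simp
    then obtain T where "open T" "x \<in> T" "T \<subseteq> S" using opA by blast
    then have "x \<in> A" unfolding A_def by blast
    then have "B \<inter> F = {}" using disj xF by blast
    then have "F \<subseteq> S" using \<open>F \<subseteq> A \<union> B\<close> AS by blast
    then show "\<forall>y\<in>F. closed_segment x y \<subseteq> F" unfolding S_def by blast
  qed
  show "convex F" using seg by (simp add: convex_contains_segment)
qed

end
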